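(* For every $G\subseteq A$ and every $\varphi\in\mathcal{L}_{CoRGAL}$, the formula $\langle[G]\rangle\langle[G]\rangle\varphi\rightarrow[\langle A\setminus G\rangle]\varphi$ is valid.
   Context: Fix a finite set $A$ of agents and a countable set $P$ of propositional variables. The language $\mathcal{L}_{CoRGAL}$ is given by $\varphi ::= p \mid \neg\varphi \mid (\varphi\wedge\varphi) \mid K_a\varphi \mid [\varphi]\varphi \mid [G,\varphi]\varphi \mid [\langle G\rangle]\varphi$ with $p\in P$, $a\in A$, $G\subseteq A$. $\mathcal{L}_{EL}$ is the fragment built only from $p,\neg,\wedge,K_a$. Duals: $\langle\psi\rangle\varphi:=\neg[\psi]\neg\varphi$, $\langle[G]\rangle\varphi:=\neg[\langle G\rangle]\neg\varphi$. For $G\subseteq A$, $\mathcal{L}^G_{EL}$ is the set of formulas $\bigwedge_{i\in G}K_i\varphi_i$ with each $\varphi_i\in\mathcal{L}_{EL}$; $\psi_G,\chi_G$ range over $\mathcal{L}^G_{EL}$. Epistemic models $M=(W,\sim,V)$: $W\neq\emptyset$, each $\sim_a$ an equivalence relation, $V:P\to\mathcal{P}(W)$; $M^\varphi$ is the restriction of $M$ to $\{v:(M,v)\models\varphi\}$. Semantics: standard for $p,\neg,\wedge,K_a$; $(M,w)\models[\varphi]\psi$ iff $(M,w)\models\varphi$ implies $(M^\varphi,w)\models\psi$; $(M,w)\models[G,\chi]\varphi$ iff $(M,w)\models\chi$ and for all $\psi_G$, $(M,w)\models[\psi_G\wedge\chi]\varphi$; $(M,w)\models[\langle G\rangle]\varphi$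 iff for every $\psi_G$ there is $\chi_{A\setminus G}$ with $(M,w)\models\psi_G\to\langle\psi_G\wedge\chi_{A\setminus G}\rangle\varphi$. Thus $(M,w)\models\langle[G]\rangle\varphi$ iff there is $\psi_G$ such that for all $\chi_{A\setminus G}$, $(M,w)\models\psi_G\wedge[\psi_G\wedge\chi_{A\setminus G}]\varphi$. A formula is valid if true at every pointed model. *)

theory Defs
  imports Main "HOL-Library.Countable"
begin

(* 'p : propositional variables, 'a : agents (the finite set A is UNIV :: 'a set) *)
datatype ('p, 'a) fm =
    Atom 'p
  | Neg "('p, 'a) fm"
  | Conj "('p, 'a) fm" "('p, 'a) fm"
  | K 'a "('p, 'a) fm"
  | Ann "('p, 'a) fm" "('p, 'a) fm"
  | GAnn "'a set" "('p, 'a) fm" "('p, 'a) fm"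
  | CoAnn "'a set" "('p, 'a) fm"             (* [<G>] phi *)

definition Imp :: "('p, 'a) fm \<Rightarrow> ('p, 'a) fm \<Rightarrow> ('p, 'a) fm" where
  "Imp \<phi> \<psi> = Neg (Conj \<phi> (Neg \<psi>))"

(* dual <[G]> phi := not [<G>] not phi *)
definition DCoAnn :: "'a set \<Rightarrow> ('p, 'a) fm \<Rightarrow> ('p, 'a) fm" where
  "DCoAnn G \<phi> = Neg (CoAnn G (Neg \<phi>))"

primrec is_EL :: "('p, 'a) fm \<Rightarrow> bool" where
  "is_EL (Atom p) = True"
| "is_EL (Neg \<phi>) = is_EL \<phi>"
| "is_EL (Conj \<phi> \<psi>) = (is_EL \<phi> \<and> is_EL \<psi>)"
| "is_EL (K a \<phi>) = is_EL \<phi>"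
| "is_EL (Ann \<phi> \<psi>) = False"
| "is_EL (GAnn G \<chi> \<phi>) = False"
| "is_EL (CoAnn G \<phi>) = False"

record ('w, 'a, 'p) kmodel =
  W :: "'w set"
  Rel :: "'a \<Rightarrow> ('w \<times> 'w) set"
  Val :: "'p \<Rightarrow> 'w set"

definition is_model :: "('w, 'a, 'p) kmodel \<Rightarrow> bool" where
  "is_model M \<longleftrightarrow> W M \<noteq> {} \<and> (\<forall>a. equiv (W M) (Rel M a))"

definition restrict :: "('w, 'a, 'p) kmodel \<Rightarrow> 'w set \<Rightarrow> ('w, 'a, 'p) kmodel" where
  "restrict M S = \<lparr> W = W M \<inter> S, Rel = (\<lambda>a. Rel M a \<inter> ((W M \<inter> S) \<times> (W M \<inter> S))),
                    Val = (\<lambda>p. Val M p \<inter> S) \<rparr>"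

(* semantics of epistemic formulas (only the static clauses matter; it is applied to L_EL formulas) *)
primrec sat_EL :: "('w, 'a, 'p) kmodel \<Rightarrow> 'w \<Rightarrow> ('p, 'a) fm \<Rightarrow> bool" where
  "sat_EL M w (Atom p) = (w \<in> Val M p)"
| "sat_EL M w (Neg \<phi>) = (\<not> sat_EL M w \<phi>)"
| "sat_EL M w (Conj \<phi> \<psi>) = (sat_EL M w \<phi> \<and> sat_EL M w \<psi>)"
| "sat_EL M w (K a \<phi>) = (\<forall>v \<in> W M. (w, v) \<in> Rel M a \<longrightarrow> sat_EL M v \<phi>)"
| "sat_EL M w (Ann \<phi> \<psi>) = False"
| "sat_EL M w (GAnn G \<chi> \<phi>) = False"
| "sat_EL M w (CoAnn G \<phi>) = False"

(* A formula psi_G in L^G_EL, i.e. /\_{i in G} K_i phi_i, is represented by the family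
   phis :: 'a => fm (with phis i in L_EL for i in G); its truth value is: *)
definition sat_G :: "('w, 'a, 'p) kmodel \<Rightarrow> 'w \<Rightarrow> 'a set \<Rightarrow> ('a \<Rightarrow> ('p, 'a) fm) \<Rightarrow> bool" where
  "sat_G M w G phis \<longleftrightarrow> (\<forall>i \<in> G. sat_EL M w (K i (phis i)))"

definition EL_family :: "'a set \<Rightarrow> ('a \<Rightarrow> ('p, 'a) fm) \<Rightarrow> bool" where
  "EL_family G phis \<longleftrightarrow> (\<forall>i \<in> G. is_EL (phis i))"

primrec sat :: "('w, 'a, 'p) kmodel \<Rightarrow> 'w \<Rightarrow> ('p, 'a) fm \<Rightarrow> bool" where
  "sat M w (Atom p) = (w \<in> Val M p)"
| "sat M w (Neg \<phi>) = (\<not> sat M w \<phi>)"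
| "sat M w (Conj \<phi> \<psi>) = (sat M w \<phi> \<and> sat M w \<psi>)"
| "sat M w (K a \<phi>) = (\<forall>v \<in> W M. (w, v) \<in> Rel M a \<longrightarrow> sat M v \<phi>)"
| "sat M w (Ann \<phi> \<psi>) =
     (sat M w \<phi> \<longrightarrow> sat (restrict M {v. sat M v \<phi>}) w \<psi>)"
| "sat M w (GAnn G \<chi> \<phi>) =
     (sat M w \<chi> \<and>
      (\<forall>phis. EL_family G phis \<longrightarrow>
         ((sat_G M w G phis \<and> sat M w \<chi>) \<longrightarrow>
          sat (restrict M {v. sat_G M v G phis \<and> sat M v \<chi>}) w \<phi>)))"
| "sat M w (CoAnn G \<phi>) =
     (\<forall>phis. EL_family G phis \<longrightarrow>
       (\<exists>chis. EL_family (- G) chis \<and>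
          (sat_G M w G phis \<longrightarrow>
             (sat_G M w G phis \<and> sat_G M w (- G) chis \<and>
              sat (restrict M {v. sat_G M v G phis \<and> sat_G M v (- G) chis}) w \<phi>))))"

definition valid :: "'w itself \<Rightarrow> ('p, 'a) fm \<Rightarrow> bool" where
  "valid (_ :: 'w itself) \<phi> \<longleftrightarrow> (\<forall>(M :: ('w, 'a, 'p) kmodel) w. is_model M \<and> w \<in> W M \<longrightarrow> sat M w \<phi>)"

end

theory Submission
  imports Defs
begin

definition TT :: "('p, 'a) fm" where
  "TT = Neg (Conj (Atom undefined) (Neg (Atom undefined)))"

lemma TT_sat[simp]: "sat_EL M v TT" and TT_EL[simp]: "is_EL TT"
  by (auto simp: TT_def)

definition conjK :: "'a list \<Rightarrow> ('a \<Rightarrow> ('p, 'a) fm) \<Rightarrow> ('p, 'a) fm" where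
  "conjK xs f = foldr (\<lambda>i acc. Conj (K i (f i)) acc) xs TT"

lemma conjK_sat: "sat_EL M v (conjK xs f) \<longleftrightarrow> (\<forall>i\<in>set xs. sat_EL M v (K i (f i)))"
  by (induction xs) (auto simp: conjK_def)

lemma conjK_EL: "\<forall>i\<in>set xs. is_EL (f i) \<Longrightarrow> is_EL (conjK xs f)"
  by (induction xs) (auto simp: conjK_def)

primrec tr :: "('p, 'a) fm \<Rightarrow> ('p, 'a) fm \<Rightarrow> ('p, 'a) fm" where
  "tr \<theta> (Atom p) = Imp \<theta> (Atom p)"
| "tr \<theta> (Neg a) = Imp \<theta> (Neg (tr \<theta> a))"
| "tr \<theta> (Conj a b) = Conj (tr \<theta> a) (tr \<theta> b)"
| "tr \<theta> (K i b) = Imp \<theta> (K i (tr \<theta> b))"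
| "tr \<theta> (Ann a b) = TT"
| "tr \<theta> (GAnn H a b) = TT"
| "tr \<theta> (CoAnn H a) = TT"

lemma tr_EL: "is_EL \<theta> \<Longrightarrow> is_EL a \<Longrightarrow> is_EL (tr \<theta> a)"
  by (induction a) (auto simp: Imp_def)

lemma tr_sat:
  assumes "is_EL a" "v \<in> W M"
  shows "sat_EL M v (tr \<theta> a) \<longleftrightarrow>
    (sat_EL M v \<theta> \<longrightarrow> sat_EL (restrict M {u. sat_EL M u \<theta>}) v a)"
  using assms
  by (induction a arbitrary: v) (auto simp: Imp_def restrict_def)

lemma restrict_restrict: "restrict (restrict M S1) S2 = restrict M (S1 \<inter> S2)"
  by (auto simp: restrict_def)

lemma Rel_sub: "is_model M \<Longrightarrow> (v,u) \<in> Rel M a \<Longrightarrow> v \<in> W M \<and> u \<in> W M"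
  unfolding is_model_def equiv_def refl_on_def by blast

lemma satG_out: "is_model M \<Longrightarrow> v \<notin> W M \<Longrightarrow> sat_G M v H f"
  by (auto simp: sat_G_def dest: Rel_sub)

theorem mainTheorem5:
  fixes G :: "('a::finite) set" and \<phi> :: "('p::countable, 'a) fm"
  shows "valid TYPE('w) (Imp (DCoAnn G (DCoAnn G \<phi>)) (CoAnn (- G) \<phi>))"
  unfolding valid_def
proof (intro allI impI)
  fix M :: "('w, 'a, 'p) kmodel" and w
  assume "is_model M \<and> w \<in> W M"
  then have mod: "is_model M" and wW: "w \<in> W M" by auto
  have "sat M w (CoAnn (- G) \<phi>)" if A: "sat M w (DCoAnn G (DCoAnn G \<phi>))"
  proof -
    from A obtain \<psi> where psiEL: "EL_family G \<psi>" and
      H: "\<And>chis. EL_family (-G) chis \<Longrightarrow> sat_G M w G \<psi> \<and> (sat_G M w (-G) chis \<longrightarrow>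
          sat (restrict M {v. sat_G M v G \<psi> \<and> sat_G M v (-G) chis}) w (DCoAnn G \<phi>))"
      unfolding DCoAnn_def by auto
    show "sat M w (CoAnn (- G) \<phi>)"
    proof (simp only: sat.simps, intro allI impI)
      fix \<chi> :: "'a \<Rightarrow> ('p, 'a) fm" assume chiEL: "EL_family (-G) \<chi>"
      show "\<exists>chis. EL_family (- (- G)) chis \<and> (sat_G M w (- G) \<chi> \<longrightarrow>
          sat_G M w (- G) \<chi> \<and> sat_G M w (- (- G)) chis \<and>
          sat (restrict M {v. sat_G M v (- G) \<chi> \<and> sat_G M v (- (- G)) chis}) w \<phi>)"
      proof (cases "sat_G M w (-G) \<chi>")
        case False
        then show ?thesis by (intro exI[of _ "\<lambda>_. TT"]) (auto simp: EL_family_def)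
      next
        case True
        define S1 where "S1 = {v. sat_G M v G \<psi> \<and> sat_G M v (-G) \<chi>}"
        define M1 where "M1 = restrict M S1"
        from H[OF chiEL] True have psiw: "sat_G M w G \<psi>" and
          B: "sat M1 w (DCoAnn G \<phi>)" by (auto simp: M1_def S1_def)
        from B obtain \<psi>2 where psi2EL: "EL_family G \<psi>2" and
          H2: "\<And>chis. EL_family (-G) chis \<Longrightarrow> sat_G M1 w G \<psi>2 \<and> (sat_G M1 w (-G) chis \<longrightarrow>
            sat (restrict M1 {v. sat_G M1 v G \<psi>2 \<and> sat_G M1 v (-G) chis}) w \<phi>)"
          unfolding DCoAnn_def by auto
        have T2: "sat_G M1 v (-G) (\<lambda>_. TT)" for v by (simp add: sat_G_def)
        from H2[of "\<lambda>_. TT"] have psi2w: "sat_G M1 w G \<psi>2"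
          and phi: "sat (restrict M1 {v. sat_G M1 v G \<psi>2}) w \<phi>"
          by (auto simp: EL_family_def T2)
        obtain gs where gs: "set gs = G" using finite_list[of G] by auto
        obtain hs where hs: "set hs = -G" using finite_list[of "-G"] by auto
        define \<theta> where "\<theta> = Conj (conjK gs \<psi>) (conjK hs \<chi>)"
        have thEL: "is_EL \<theta>" using psiEL chiEL gs hs
          by (auto simp: \<theta>_def EL_family_def intro!: conjK_EL)
        have thS: "sat_EL M v \<theta> \<longleftrightarrow> v \<in> S1" for v
          by (simp add: \<theta>_def conjK_sat gs hs S1_def sat_G_def del: sat_EL.simps(4))
        have S1eq: "{u. sat_EL M u \<theta>} = S1" using thS by auto
        define \<psi>' where "\<psi>' = (\<lambda>i. Conj (\<psi> i) (tr \<theta> (\<psi>2 i)))"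
        have psi'EL: "EL_family G \<psi>'" using psiEL psi2EL thEL
          by (auto simp: EL_family_def \<psi>'_def intro: tr_EL)
        have key: "sat_G M v (-G) \<chi> \<and> sat_G M v G \<psi>' \<longleftrightarrow>
            v \<in> S1 \<and> sat_G M1 v G \<psi>2" if vW: "v \<in> W M" for v
        proof -
          have "sat_G M v G \<psi>' \<longleftrightarrow> sat_G M v G \<psi> \<and>
             (\<forall>i\<in>G. \<forall>u\<in>W M. (v,u) \<in> Rel M i \<longrightarrow> (u \<in> S1 \<longrightarrow> sat_EL M1 u (\<psi>2 i)))"
            using psi2EL
            by (auto simp: sat_G_def \<psi>'_def tr_sat S1eq thS M1_def EL_family_def)
          moreover have "v \<in> S1 \<Longrightarrow> sat_G M1 v G \<psi>2 \<longleftrightarrow>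
             (\<forall>i\<in>G. \<forall>u\<in>W M. (v,u) \<in> Rel M i \<longrightarrow> (u \<in> S1 \<longrightarrow> sat_EL M1 u (\<psi>2 i)))"
            using vW by (auto simp: sat_G_def M1_def restrict_def)
          ultimately show ?thesis by (auto simp: S1_def)
        qed
        have Seq: "{v. sat_G M v (- G) \<chi> \<and> sat_G M v (- (- G)) \<psi>'} = S1 \<inter> {v. sat_G M1 v G \<psi>2}"
        proof (rule set_eqI)
          fix v show "v \<in> {v. sat_G M v (- G) \<chi> \<and> sat_G M v (- (- G)) \<psi>'} \<longleftrightarrow>
                v \<in> S1 \<inter> {v. sat_G M1 v G \<psi>2}"
          proof (cases "v \<in> W M")
            case True then show ?thesis using key by auto
          next
            case False
            have m1: "is_model M1 \<or> True" by simp
            have "sat_G M1 v G \<psi>2" using False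
              by (auto simp: sat_G_def M1_def restrict_def)
            then show ?thesis using False satG_out[OF mod] by (auto simp: S1_def)
          qed
        qed
        show ?thesis
          apply (intro exI[of _ \<psi>'])
          using psi'EL True key[OF wW] psiw psi2w phi Seq
          by (auto simp: restrict_restrict M1_def S1_def)
      qed
    qed
  qed
  then show "sat M w (Imp (DCoAnn G (DCoAnn G \<phi>)) (CoAnn (- G) \<phi>))"
    unfolding Imp_def by (simp del: sat.simps(7) add: sat.simps(1-3))
qed

end
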